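(* Let $r>0$ and let $\varphi:[0,r]\to(-\infty,0]$ be a non-increasing function such that $\varphi(x)/x\to0$ as $x\searrow0$. Let $\alpha:\mathbb{R}\to(-\infty,0]$ be given by $$\alpha(x)=\sup\Big\{ax^2+c:\ a,c\le0,\ ay^2+c\le\varphi(y)\text{ for }0\le y\le r\Big\},\qquad x\in\mathbb{R}.$$ Then (1) $\alpha$ is Lipschitz and $\alpha(x)/x\to0$ as $x\to0$; (2) $\alpha'(x)/x$ is non-decreasing on its domain (the set of $x>0$ where $\alpha'$ exists) for $x>0$; (3) $\displaystyle\int_0^\infty\frac{\alpha(x)}{x^2}\,dx\ge 2\frac{\varphi(r)}{r}+3\int_0^r\frac{\varphi(x)}{x^2}\,dx.$ *)

theory Defs
  imports "HOL-Analysis.Analysis"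
begin

definition alpha_fun :: "(real \<Rightarrow> real) \<Rightarrow> real \<Rightarrow> real \<Rightarrow> real" where
  "alpha_fun \<phi> r x = Sup {a * x\<^sup>2 + c | a c. a \<le> 0 \<and> c \<le> 0 \<and> (\<forall>y\<in>{0..r}. a * y\<^sup>2 + c \<le> \<phi> y)}"

end

theory Submission
  imports Defs
begin

lemma meas_F:
  fixes \<psi> :: "real \<Rightarrow> real" and r :: real
  assumes [measurable]: "\<psi> \<in> borel_measurable borel"
  shows "(\<lambda>(x,u). ennreal (\<psi> u / u^3) * indicator {x..r} u * indicator {0<..r} x) \<in> borel_measurable (lborel \<Otimes>\<^sub>M lborel)"
proof -
  have e: "(\<lambda>(x,u). ennreal (\<psi> u / u^3) * indicator {x..r} u * indicator {0<..r} x) =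
     (\<lambda>p. ennreal (\<psi> (snd p) / (snd p)^3) * indicator {p. fst p \<le> snd p \<and> snd p \<le> r} p * indicator {0<..r} (fst p))"
    by (auto simp: fun_eq_iff split: split_indicator)
  show ?thesis unfolding e by measurable
qed

lemma h4:
  fixes c r :: real assumes "r > 0" "c \<ge> 0"
  shows "(\<integral>\<^sup>+x. ennreal (c / x^2) * indicator {r..} x \<partial>lborel) = ennreal (c / r)"
proof -
  have "((\<lambda>x. x powr (-2)) has_integral -(r powr (-2+1)) / (-2+1)) {r..}"
    using assms by (intro has_integral_powr_to_inf) auto
  then have "((\<lambda>x. c * x powr (-2)) has_integral c * (-(r powr (-2+1)) / (-2+1))) {r..}"
    by (rule has_integral_mult_right)
  then have "((\<lambda>x. c / x^2) has_integral c / r) {r..}"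
    using assms by (subst has_integral_cong[where g="\<lambda>x. c * x powr (-2)"]) (auto simp: powr_minus powr_minus_divide divide_inverse powr_numeral)
  then show ?thesis using assms by (intro nn_integral_has_integral_lebesgue') auto
qed

lemma J3:
  fixes c r y :: real assumes "0 < y" "y \<le> r" "c \<ge> 0"
  shows "(\<integral>\<^sup>+u. ennreal (c / u^3) * indicator {y..r} u \<partial>lborel) = ennreal (c * ((1/y^2 - 1/r^2)/2))"
proof -
  have "((\<lambda>u. c / u^3) has_integral ((\<lambda>u. -c/(2*u^2)) r - (\<lambda>u. -c/(2*u^2)) y)) {y..r}"
  proof (rule fundamental_theorem_of_calculus)
    show "y \<le> r" by fact
    fix u assume u: "u \<in> {y..r}"
    then have "u > 0" using assms by auto
    have "((\<lambda>u. -c/(2*u^2)) has_real_derivative c / u^3) (at u within {y..r})"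
      using \<open>u > 0\<close> by (auto intro!: derivative_eq_intros simp: field_simps power2_eq_square power3_eq_cube)
    then show "((\<lambda>u. -c/(2*u^2)) has_vector_derivative c / u^3) (at u within {y..r})"
      by (simp add: has_real_derivative_iff_has_vector_derivative)
  qed
  moreover have "(\<lambda>u. -c/(2*u^2)) r - (\<lambda>u. -c/(2*u^2)) y = c * ((1/y^2 - 1/r^2)/2)"
    using assms by (simp add: field_simps)
  ultimately have I: "((\<lambda>u. c / u^3) has_integral c * ((1/y^2 - 1/r^2)/2)) {y..r}" by (simp only:)
  show ?thesis by (rule nn_integral_has_integral_lebesgue'[OF _ I]) (use assms in auto)
qed

lemma meas_G:
  fixes \<psi> :: "real \<Rightarrow> real" and r :: real
  assumes [measurable]: "\<psi> \<in> borel_measurable borel"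
  shows "(\<lambda>(x,u). ennreal (\<psi> u / u^3) * indicator {x..r} u) \<in> borel_measurable (lborel \<Otimes>\<^sub>M lborel)"
proof -
  have e: "(\<lambda>(x,u). ennreal (\<psi> u / u^3) * indicator {x..r} u) =
     (\<lambda>p. ennreal (\<psi> (snd p) / (snd p)^3) * indicator {p. fst p \<le> snd p \<and> snd p \<le> r} p)"
    by (auto simp: fun_eq_iff split: split_indicator)
  show ?thesis unfolding e by measurable
qed

lemma meas_J:
  fixes \<psi> :: "real \<Rightarrow> real" and r :: real
  assumes [measurable]: "\<psi> \<in> borel_measurable borel"
  shows "(\<lambda>x. \<integral>\<^sup>+u. ennreal (\<psi> u / u^3) * indicator {x..r} u \<partial>lborel) \<in> borel_measurable lborel"
  using lborel.borel_measurable_nn_integral[OF meas_G[OF assms, of r]] by simp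

lemma tonelli:
  fixes \<psi> :: "real \<Rightarrow> real" and r :: real
  assumes [measurable]: "\<psi> \<in> borel_measurable borel" and nn: "\<And>x. 0 \<le> \<psi> x"
  shows "(\<integral>\<^sup>+x. (\<integral>\<^sup>+u. ennreal (\<psi> u / u^3) * indicator {x..r} u \<partial>lborel) * indicator {0<..r} x \<partial>lborel)
       = (\<integral>\<^sup>+u. ennreal (\<psi> u / u^2) * indicator {0<..r} u \<partial>lborel)"
proof -
  have "(\<integral>\<^sup>+x. (\<integral>\<^sup>+u. ennreal (\<psi> u / u^3) * indicator {x..r} u \<partial>lborel) * indicator {0<..r} x \<partial>lborel)
     = (\<integral>\<^sup>+x. (\<integral>\<^sup>+u. ennreal (\<psi> u / u^3) * indicator {x..r} u * indicator {0<..r} x \<partial>lborel) \<partial>lborel)"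
    by (intro nn_integral_cong nn_integral_multc[symmetric]) measurable
  also have "\<dots> = (\<integral>\<^sup>+u. (\<integral>\<^sup>+x. ennreal (\<psi> u / u^3) * indicator {x..r} u * indicator {0<..r} x \<partial>lborel) \<partial>lborel)"
    by (rule lborel_pair.Fubini'[symmetric]) (rule meas_F, simp)
  also have "\<dots> = (\<integral>\<^sup>+u. ennreal (\<psi> u / u^2) * indicator {0<..r} u \<partial>lborel)"
  proof (rule nn_integral_cong)
    fix u :: real
    have "(\<integral>\<^sup>+x. ennreal (\<psi> u / u^3) * indicator {x..r} u * indicator {0<..r} x \<partial>lborel)
        = (\<integral>\<^sup>+x. (ennreal (\<psi> u / u^3) * indicator {0<..r} u) * indicator {0<..u} x \<partial>lborel)"
      by (intro nn_integral_cong) (auto split: split_indicator)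
    also have "\<dots> = ennreal (\<psi> u / u^3) * indicator {0<..r} u * emeasure lborel {0<..u}"
      by (rule nn_integral_cmult_indicator) simp
    also have "\<dots> = ennreal (\<psi> u / u^2) * indicator {0<..r} u"
    proof (cases "u \<in> {0<..r}")
      case True
      then have "ennreal (\<psi> u / u^3) * emeasure lborel {0<..u} = ennreal (\<psi> u / u^3 * u)"
      proof -
        have "ennreal (\<psi> u / u^3 * u) = ennreal (\<psi> u / u^3) * ennreal u"
          by (rule ennreal_mult) (use True nn[of u] in auto)
        then show ?thesis using True by simp
      qed
      also have "\<psi> u / u^3 * u = \<psi> u / u^2" using True by (simp add: power2_eq_square power3_eq_cube)
      finally show ?thesis using True by simp
    qed simp
    finally show "(\<integral>\<^sup>+x. ennreal (\<psi> u / u^3) * indicator {x..r} u * indicator {0<..r} x \<partial>lborel)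
        = ennreal (\<psi> u / u^2) * indicator {0<..r} u" .
  qed
  finally show ?thesis .
qed



context
  fixes \<phi> :: "real \<Rightarrow> real" and r :: real
  assumes r_pos: "r > 0"
    and phi_nonpos: "\<forall>x\<in>{0..r}. \<phi> x \<le> 0"
    and phi_noninc: "\<forall>x\<in>{0..r}. \<forall>y\<in>{0..r}. x \<le> y \<longrightarrow> \<phi> y \<le> \<phi> x"
    and phi_lim: "((\<lambda>x. \<phi> x / x) \<longlongrightarrow> 0) (at_right 0)"
begin

definition feas where "feas a c \<longleftrightarrow> a \<le> 0 \<and> c \<le> 0 \<and> (\<forall>y\<in>{0..r}. a*y^2+c \<le> \<phi> y)"

lemma alpha_eq: "alpha_fun \<phi> r x = Sup {a*x^2+c | a c. feas a c}"
  unfolding alpha_fun_def feas_def by simp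

lemma feas0: "feas 0 (\<phi> r)"
  using r_pos phi_nonpos phi_noninc unfolding feas_def by auto

lemma feas_le0: "feas a c \<Longrightarrow> a*x^2+c \<le> 0"
  unfolding feas_def by (smt (verit) mult_nonpos_nonneg zero_le_power2)

lemma alpha_upper: "feas a c \<Longrightarrow> a*x^2+c \<le> alpha_fun \<phi> r x"
  unfolding alpha_eq by (rule cSup_upper) (auto intro!: bdd_aboveI[where M=0] feas_le0)

lemma alpha_least: "(\<And>a c. feas a c \<Longrightarrow> a*x^2+c \<le> B) \<Longrightarrow> alpha_fun \<phi> r x \<le> B"
  unfolding alpha_eq by (rule cSup_least) (use feas0 in auto)

lemma alpha_nonpos: "alpha_fun \<phi> r x \<le> 0"
  by (rule alpha_least) (rule feas_le0)

lemma alpha_ge: "\<phi> r \<le> alpha_fun \<phi> r x"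
  using alpha_upper[OF feas0, of x] by simp

lemma alpha_even: "alpha_fun \<phi> r (-x) = alpha_fun \<phi> r x"
  unfolding alpha_fun_def by simp

lemma alpha_abs: "alpha_fun \<phi> r \<bar>x\<bar> = alpha_fun \<phi> r x"
  by (cases "x \<ge> 0") (auto simp: alpha_even[of x, symmetric])

lemma alpha_anti: assumes "x^2 \<le> y^2" shows "alpha_fun \<phi> r y \<le> alpha_fun \<phi> r x"
proof (rule alpha_least)
  fix a c assume f: "feas a c"
  then have "a*y^2+c \<le> a*x^2+c" using assms unfolding feas_def
    by (simp add: mult_left_mono_neg)
  also have "\<dots> \<le> alpha_fun \<phi> r x" by (rule alpha_upper[OF f])
  finally show "a*y^2+c \<le> alpha_fun \<phi> r x" .
qed

lemma alpha_conv: assumes "0 < x" "x \<le> y"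
  shows "alpha_fun \<phi> r x \<le> alpha_fun \<phi> r y * (x^2/y^2)"
proof (rule alpha_least)
  fix a c assume f: "feas a c"
  have y: "y > 0" using assms by simp
  have t0: "0 \<le> x^2/y^2" and t1: "x^2/y^2 \<le> 1"
    using assms by (auto simp: power_mono)
  have c: "c \<le> 0" using f unfolding feas_def by simp
  have "a*x^2+c = (x^2/y^2) * (a*y^2+c) + c*(1 - x^2/y^2)"
    using y by (simp add: field_simps)
  also have "\<dots> \<le> (x^2/y^2) * (a*y^2+c)"
    using c t1 by (simp add: mult_nonpos_nonneg)
  also have "\<dots> \<le> (x^2/y^2) * alpha_fun \<phi> r y"
    by (intro mult_left_mono alpha_upper[OF f] t0)
  finally show "a*x^2+c \<le> alpha_fun \<phi> r y * (x^2/y^2)" by (simp add: mult.commute)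
qed

lemma phi0: "\<phi> 0 = 0"
proof (rule ccontr)
  assume ne: "\<phi> 0 \<noteq> 0"
  have le: "\<phi> 0 \<le> 0" using phi_nonpos r_pos by auto
  have "((\<lambda>x. \<phi> x / x * x) \<longlongrightarrow> 0 * 0) (at_right 0)"
    by (intro tendsto_mult phi_lim) (simp add: tendsto_ident_at filterlim_ident)
  moreover have "eventually (\<lambda>x. \<phi> x / x * x = \<phi> x) (at_right (0::real))"
    by (simp add: eventually_at_right_less[THEN eventually_mono])
  ultimately have "(\<phi> \<longlongrightarrow> 0) (at_right 0)"
    by (simp add: tendsto_cong)
  then have "eventually (\<lambda>x. \<phi> 0 < \<phi> x) (at_right 0)"
    using ne le by (intro order_tendstoD) auto
  then obtain b where b: "b > 0" "\<And>y. 0 < y \<Longrightarrow> y < b \<Longrightarrow> \<phi> 0 < \<phi> y"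
    unfolding eventually_at_right_field by auto
  define y where "y = min (b/2) r"
  have "0 < y" "y < b" "y \<le> r" using b r_pos by (auto simp: y_def)
  then have "\<phi> 0 < \<phi> y" "\<phi> y \<le> \<phi> 0" using b phi_noninc by auto
  then show False by simp
qed

lemma alpha_small:
  assumes e: "\<epsilon> > 0"
  shows "\<exists>d>0. \<forall>x. 0 < x \<and> x \<le> d \<longrightarrow> -\<epsilon>*x \<le> alpha_fun \<phi> r x"
proof -
  have "eventually (\<lambda>x. dist (\<phi> x / x) 0 < \<epsilon>) (at_right 0)"
    using phi_lim e by (rule tendstoD)
  then obtain d0 where d0: "d0 > 0" "\<And>y. 0 < y \<Longrightarrow> y < d0 \<Longrightarrow> \<bar>\<phi> y / y\<bar> < \<epsilon>"
    unfolding eventually_at_right_field by auto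
  define \<delta> where "\<delta> = min (d0/2) r"
  have \<delta>: "0 < \<delta>" "\<delta> \<le> r" "\<delta> < d0" using d0 r_pos by (auto simp: \<delta>_def)
  have low: "-\<epsilon>*y \<le> \<phi> y" if "0 \<le> y" "y \<le> \<delta>" for y
  proof (cases "y = 0")
    case True then show ?thesis using phi0 by simp
  next
    case False
    then have "\<bar>\<phi> y / y\<bar> < \<epsilon>" using d0 that \<delta> by auto
    moreover have "y > 0" using False that by simp
    ultimately have "-\<epsilon> < \<phi> y / y" by linarith
    then have "-\<epsilon> * y < \<phi> y" using \<open>y > 0\<close> by (simp add: less_divide_eq)
    then show ?thesis by linarith
  qed
  have pr: "\<phi> r \<le> 0" using phi_nonpos r_pos by auto
  define d where "d = min \<delta> (\<epsilon>*\<delta>^2/(2*(1 - \<phi> r)))"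
  have d: "d > 0" using \<delta> e pr by (auto simp: d_def)
  have "-\<epsilon>*x \<le> alpha_fun \<phi> r x" if x: "0 < x" "x \<le> d" for x
  proof -
    define a where "a = -\<epsilon>/(2*x)"
    define c where "c = -\<epsilon>*x/2"
    have a0: "a \<le> 0" using e x by (simp add: a_def)
    have big: "1 - \<phi> r \<le> \<epsilon>*\<delta>^2/(2*x)"
    proof -
      have "x \<le> \<epsilon>*\<delta>^2/(2*(1 - \<phi> r))" using x by (simp add: d_def)
      then have "x * (2*(1 - \<phi> r)) \<le> \<epsilon>*\<delta>^2" using pr by (simp add: le_divide_eq)
      then show ?thesis using x by (simp add: le_divide_eq algebra_simps)
    qed
    have "feas a c" unfolding feas_def
    proof (intro conjI ballI)
      show "a \<le> 0" by (rule a0)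
      show "c \<le> 0" using e x by (simp add: c_def)
      fix y assume y: "y \<in> {0..r}"
      show "a*y^2+c \<le> \<phi> y"
      proof (cases "y \<le> \<delta>")
        case True
        have "a*y^2+c = -\<epsilon>*y - \<epsilon>*(y-x)^2/(2*x)"
          using x by (simp add: a_def c_def field_simps power2_eq_square)
        also have "\<dots> \<le> -\<epsilon>*y" using e x by simp
        also have "\<dots> \<le> \<phi> y" using low y True by auto
        finally show ?thesis .
      next
        case False
        have "a*y^2 \<le> a*\<delta>^2" using False \<delta> a0
          by (intro mult_left_mono_neg power_mono) auto
        moreover have "a*\<delta>^2 = -(\<epsilon>*\<delta>^2/(2*x))" by (simp add: a_def)
        moreover have "\<phi> r \<le> \<phi> y" using y phi_noninc r_pos by auto
        moreover have "c \<le> 0" using e x by (simp add: c_def)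
        ultimately show ?thesis using big by linarith
      qed
    qed
    then have "a*x^2+c \<le> alpha_fun \<phi> r x" by (rule alpha_upper)
    moreover have "a*x^2+c = -\<epsilon>*x" using x by (simp add: a_def c_def field_simps power2_eq_square)
    ultimately show ?thesis by simp
  qed
  then show ?thesis using d by blast
qed

lemma alpha_K: "\<exists>K>0. \<forall>x>0. -alpha_fun \<phi> r x \<le> K*x"
proof -
  obtain d where d: "d > 0" "\<And>x. 0 < x \<Longrightarrow> x \<le> d \<Longrightarrow> -1*x \<le> alpha_fun \<phi> r x"
    using alpha_small[of 1] by auto
  define K where "K = max 1 (-\<phi> r/d)"
  have "-alpha_fun \<phi> r x \<le> K*x" if x: "x > 0" for x
  proof (cases "x \<le> d")
    case True
    then have "-alpha_fun \<phi> r x \<le> x" using d x by force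
    also have "\<dots> \<le> K*x" using x by (simp add: K_def)
    finally show ?thesis .
  next
    case False
    have pr: "\<phi> r \<le> 0" using phi_nonpos r_pos by auto
    have "-alpha_fun \<phi> r x \<le> -\<phi> r" using alpha_ge[of x] by simp
    also have "\<dots> = (-\<phi> r/d) * d" using d by simp
    also have "\<dots> \<le> (-\<phi> r/d) * x" using False pr d by (intro mult_left_mono) (auto simp: divide_nonpos_pos)
    also have "\<dots> \<le> K*x" using x by (intro mult_right_mono) (auto simp: K_def)
    finally show ?thesis .
  qed
  moreover have "K > 0" by (simp add: K_def)
  ultimately show ?thesis by blast
qed

lemma alpha0: "alpha_fun \<phi> r 0 = 0"
proof (rule ccontr)
  assume "alpha_fun \<phi> r 0 \<noteq> 0"
  then have n: "alpha_fun \<phi> r 0 < 0" using alpha_nonpos[of 0] by simp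
  obtain d where d: "d > 0" "\<And>x. 0 < x \<Longrightarrow> x \<le> d \<Longrightarrow> -1*x \<le> alpha_fun \<phi> r x"
    using alpha_small[of 1] by auto
  define x where "x = min d (-alpha_fun \<phi> r 0/2)"
  have x: "0 < x" "x \<le> d" "x \<le> -alpha_fun \<phi> r 0/2" using d n by (auto simp: x_def)
  have "alpha_fun \<phi> r x \<le> alpha_fun \<phi> r 0" by (rule alpha_anti) simp
  moreover have "-x \<le> alpha_fun \<phi> r x" using d x by force
  ultimately show False using x n by linarith
qed

lemma alpha_lipcore:
  assumes K: "K > 0" "\<forall>x>0. -alpha_fun \<phi> r x \<le> K*x" and xy: "0 \<le> x" "x \<le> y"
  shows "alpha_fun \<phi> r x - alpha_fun \<phi> r y \<le> 3*K*(y-x)"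
proof (cases "x = 0 \<or> 2*x \<le> y")
  case True
  show ?thesis
  proof (cases "y = 0")
    case True then show ?thesis using xy by simp
  next
    case False
    then have y: "y > 0" using xy by simp
    have "alpha_fun \<phi> r x - alpha_fun \<phi> r y \<le> - alpha_fun \<phi> r y" using alpha_nonpos[of x] by simp
    also have "\<dots> \<le> K*y" using K y by simp
    also have "\<dots> \<le> K*(2*(y-x))" using True K xy by (intro mult_left_mono) auto
    also have "\<dots> \<le> 3*K*(y-x)" using K xy by simp
    finally show ?thesis .
  qed
next
  case False
  then have x: "x > 0" and y2: "y < 2*x" using xy by auto
  have y: "y > 0" using x xy by simp
  have c: "alpha_fun \<phi> r x \<le> alpha_fun \<phi> r y * (x^2/y^2)" using alpha_conv x xy by simp
  have "alpha_fun \<phi> r x * (y^2/x^2) \<le> alpha_fun \<phi> r y * (x^2/y^2) * (y^2/x^2)"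
    using c by (intro mult_right_mono) auto
  also have "\<dots> = alpha_fun \<phi> r y" using x y by simp
  finally have h: "alpha_fun \<phi> r x * (y^2/x^2) \<le> alpha_fun \<phi> r y" .
  have q: "0 \<le> (y^2-x^2)/x^2" using xy x by (simp add: power_mono)
  have "alpha_fun \<phi> r x - alpha_fun \<phi> r y \<le> alpha_fun \<phi> r x - alpha_fun \<phi> r x * (y^2/x^2)"
    using h by simp
  also have "\<dots> = (-alpha_fun \<phi> r x) * ((y^2-x^2)/x^2)" using x by (simp add: field_simps)
  also have "\<dots> \<le> (K*x) * ((y^2-x^2)/x^2)" using K x q by (intro mult_right_mono) auto
  also have "\<dots> = K*(y-x)*((y+x)/x)" using x by (simp add: field_simps power2_eq_square)
  also have "\<dots> \<le> K*(y-x)*3"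
    using K xy x y2 by (intro mult_left_mono) (auto simp: divide_le_eq)
  finally show ?thesis by simp
qed

lemma alpha_lip: "\<exists>L. L-lipschitz_on UNIV (alpha_fun \<phi> r)"
proof -
  obtain K where K: "K > 0" "\<forall>x>0. -alpha_fun \<phi> r x \<le> K*x" using alpha_K by auto
  have main: "\<bar>alpha_fun \<phi> r u - alpha_fun \<phi> r v\<bar> \<le> 3*K*\<bar>u - v\<bar>" if "0 \<le> u" "0 \<le> v" for u v
  proof (cases "u \<le> v")
    case True
    have "alpha_fun \<phi> r v \<le> alpha_fun \<phi> r u" using True that by (intro alpha_anti power_mono)
    then show ?thesis using alpha_lipcore[OF K that(1) True] True by simp
  next
    case False
    have "alpha_fun \<phi> r u \<le> alpha_fun \<phi> r v" using False that by (intro alpha_anti power_mono) auto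
    then show ?thesis using alpha_lipcore[OF K that(2), of u] False by simp
  qed
  have "(3*K)-lipschitz_on UNIV (alpha_fun \<phi> r)"
  proof (rule lipschitz_onI)
    fix x y :: real
    have "dist (alpha_fun \<phi> r x) (alpha_fun \<phi> r y) = \<bar>alpha_fun \<phi> r \<bar>x\<bar> - alpha_fun \<phi> r \<bar>y\<bar>\<bar>"
      by (simp add: alpha_abs dist_real_def)
    also have "\<dots> \<le> 3*K*\<bar>\<bar>x\<bar> - \<bar>y\<bar>\<bar>" by (rule main) auto
    also have "\<dots> \<le> 3*K*\<bar>x - y\<bar>" using K by (intro mult_left_mono) auto
    finally show "dist (alpha_fun \<phi> r x) (alpha_fun \<phi> r y) \<le> 3*K * dist x y"
      by (simp add: dist_real_def)
  qed (use K in simp)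
  then show ?thesis by blast
qed

lemma alpha_lim: "((\<lambda>x. alpha_fun \<phi> r x / x) \<longlongrightarrow> 0) (at 0)"
  unfolding LIM_eq
proof (intro allI impI)
  fix R :: real assume R: "R > 0"
  obtain d where d: "d > 0" "\<And>x. 0 < x \<Longrightarrow> x \<le> d \<Longrightarrow> -(R/2)*x \<le> alpha_fun \<phi> r x"
    using alpha_small[of "R/2"] R by auto
  have "norm (alpha_fun \<phi> r x / x - 0) < R" if x: "x \<noteq> 0" "norm (x - 0) < d" for x
  proof -
    have ax: "0 < \<bar>x\<bar>" "\<bar>x\<bar> \<le> d" using x by auto
    have "-(R/2)*\<bar>x\<bar> \<le> alpha_fun \<phi> r x" using d(2)[OF ax] by (simp add: alpha_abs)
    moreover have "alpha_fun \<phi> r x \<le> 0" by (rule alpha_nonpos)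
    ultimately have "\<bar>alpha_fun \<phi> r x\<bar> \<le> (R/2)*\<bar>x\<bar>" by simp
    then have "\<bar>alpha_fun \<phi> r x\<bar> / \<bar>x\<bar> \<le> R/2" using ax by (simp add: divide_le_eq)
    then have "\<bar>alpha_fun \<phi> r x\<bar> / \<bar>x\<bar> < R" using R by linarith
    then show ?thesis by (simp add: abs_divide)
  qed
  then show "\<exists>s>0. \<forall>x. x \<noteq> 0 \<and> norm (x - 0) < s \<longrightarrow> norm (alpha_fun \<phi> r x / x - 0) < R"
    using d by blast
qed

definition gfun where "gfun t = Sup {a*t+c | a c. feas a c}"

lemma g_upper: "feas a c \<Longrightarrow> 0 \<le> t \<Longrightarrow> a*t+c \<le> gfun t"
  unfolding gfun_def
proof (rule cSup_upper)
  assume "feas a c" "0 \<le> t"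
  then show "a*t+c \<in> {a*t+c | a c. feas a c}" by blast
  show "bdd_above {a*t+c | a c. feas a c}"
    using \<open>0 \<le> t\<close> by (intro bdd_aboveI[where M=0]) (auto simp: feas_def mult_nonpos_nonneg add_nonpos_nonpos)
qed

lemma g_least: "(\<And>a c. feas a c \<Longrightarrow> a*t+c \<le> B) \<Longrightarrow> gfun t \<le> B"
  unfolding gfun_def by (rule cSup_least) (use feas0 in auto)

lemma alpha_g: "alpha_fun \<phi> r x = gfun (x^2)"
  unfolding alpha_eq gfun_def ..

lemma g_convex: "convex_on {0<..} (\<lambda>s. alpha_fun \<phi> r (sqrt s))"
proof (rule convex_onI)
  fix t u v :: real assume t: "0 < t" "t < 1" and u: "u \<in> {0<..}" and v: "v \<in> {0<..}"
  have "gfun ((1-t)*u + t * v) \<le> (1-t) * gfun u + t * gfun v"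
  proof (rule g_least)
    fix a c assume f: "feas a c"
    have "a*((1-t)*u + t * v) + c = (1-t)*(a*u+c) + t*(a * v+c)" by (simp add: algebra_simps)
    also have "\<dots> \<le> (1-t) * gfun u + t * gfun v"
      using t u v g_upper[OF f, of u] g_upper[OF f, of v]
      by (intro add_mono mult_left_mono) auto
    finally show "a*((1-t)*u + t * v) + c \<le> (1-t) * gfun u + t * gfun v" .
  qed
  moreover have "0 \<le> (1-t)*u + t * v" using t u v by auto
  ultimately show "alpha_fun \<phi> r (sqrt ((1 - t) *\<^sub>R u + t *\<^sub>R v))
      \<le> (1 - t) * alpha_fun \<phi> r (sqrt u) + t * alpha_fun \<phi> r (sqrt v)"
    using u v by (simp add: alpha_g)
qed (rule convex_real_interval)

lemma alpha_tangent:
  assumes x: "x > 0" and y: "y > 0" and D: "(alpha_fun \<phi> r has_real_derivative D) (at x)"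
  shows "alpha_fun \<phi> r y - alpha_fun \<phi> r x \<ge> D / (2*x) * (y^2 - x^2)"
proof -
  have d: "((\<lambda>s. alpha_fun \<phi> r (sqrt s)) has_real_derivative D * (inverse (sqrt (x^2)) / 2)) (at (x^2))"
    using x D by (intro DERIV_chain2[where f="alpha_fun \<phi> r"] DERIV_real_sqrt) auto
  have "(\<lambda>s. alpha_fun \<phi> r (sqrt s)) (y^2) - (\<lambda>s. alpha_fun \<phi> r (sqrt s)) (x^2)
      \<ge> D * (inverse (sqrt (x^2)) / 2) * (y^2 - x^2)"
    by (rule convex_on_imp_above_tangent[OF g_convex])
       (use x y d in \<open>auto simp: interior_open has_field_derivative_at_within\<close>)
  then show ?thesis using x y by (simp add: field_simps)
qed

lemma alpha_deriv_mono:
  assumes "0 < x" "x \<le> y" "alpha_fun \<phi> r differentiable (at x)" "alpha_fun \<phi> r differentiable (at y)"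
  shows "deriv (alpha_fun \<phi> r) x / x \<le> deriv (alpha_fun \<phi> r) y / y"
proof (cases "x = y")
  case True then show ?thesis by simp
next
  case False
  then have xy: "x < y" using assms by simp
  have y: "y > 0" using assms by simp
  define Dx where "Dx = deriv (alpha_fun \<phi> r) x"
  define Dy where "Dy = deriv (alpha_fun \<phi> r) y"
  have dx: "(alpha_fun \<phi> r has_real_derivative Dx) (at x)"
    using assms(3) unfolding Dx_def by (simp add: DERIV_deriv_iff_real_differentiable)
  have dy: "(alpha_fun \<phi> r has_real_derivative Dy) (at y)"
    using assms(4) unfolding Dy_def by (simp add: DERIV_deriv_iff_real_differentiable)
  have 1: "alpha_fun \<phi> r y - alpha_fun \<phi> r x \<ge> Dx / (2*x) * (y^2 - x^2)"
    by (rule alpha_tangent[OF assms(1) y dx])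
  have 2: "alpha_fun \<phi> r x - alpha_fun \<phi> r y \<ge> Dy / (2*y) * (x^2 - y^2)"
    by (rule alpha_tangent[OF y assms(1) dy])
  have p: "y^2 - x^2 > 0" using xy assms(1) by (simp add: power_strict_mono)
  have "(Dx / (2*x) - Dy/(2*y)) * (y^2 - x^2) \<le> 0" using 1 2 by (simp add: algebra_simps)
  then have "Dx / (2*x) - Dy/(2*y) \<le> 0" using p by (simp add: mult_le_0_iff)
  then have "Dx / (2*x) \<le> Dy/(2*y)" by simp
  then show ?thesis unfolding Dx_def Dy_def by (simp add: divide_le_cancel)
qed

definition psic where "psic x = -\<phi> (min r (max 0 x))"

lemma psic_nn: "0 \<le> psic x"
  unfolding psic_def using phi_nonpos r_pos by auto

lemma psic_mono: "mono psic"
proof (rule monoI)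
  fix x y :: real assume "x \<le> y"
  then show "psic x \<le> psic y" unfolding psic_def using phi_noninc r_pos
    by (auto simp: min_def max_def)
qed

lemma psic_meas[measurable]: "psic \<in> borel_measurable borel"
  using psic_mono by (rule borel_measurable_mono)

lemma psic_eq: "x \<in> {0..r} \<Longrightarrow> psic x = -\<phi> x"
  unfolding psic_def by auto

definition JJ where "JJ x = (\<integral>\<^sup>+u. ennreal (psic u / u^3) * indicator {x..r} u \<partial>lborel)"

lemma JJ_fin: assumes x: "0 < x" shows "JJ x < top"
proof -
  have "JJ x \<le> (\<integral>\<^sup>+u. ennreal (psic r / x^3) * indicator {x..r} u \<partial>lborel)"
    unfolding JJ_def
  proof (intro nn_integral_mono)
    fix u
    show "ennreal (psic u / u^3) * indicator {x..r} u \<le> ennreal (psic r / x^3) * indicator {x..r} u"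
    proof (cases "u \<in> {x..r}")
      case True
      then have "psic u \<le> psic r" using psic_mono by (auto simp: mono_def)
      moreover have "x^3 \<le> u^3" using True x by (intro power_mono) auto
      ultimately have "psic u / u^3 \<le> psic r / x^3" using x psic_nn[of u]
        by (intro frac_le) auto
      then show ?thesis using True by (simp add: ennreal_leI)
    qed simp
  qed
  also have "\<dots> = ennreal (psic r / x^3) * emeasure lborel {x..r}"
    by (rule nn_integral_cmult_indicator) simp
  also have "\<dots> < top" by (simp add: emeasure_lborel_Icc_eq ennreal_mult_less_top)
  finally show ?thesis .
qed

lemma JJ_anti: "x \<le> y \<Longrightarrow> JJ y \<le> JJ x"
  unfolding JJ_def by (intro nn_integral_mono) (auto split: split_indicator)

lemma JJ_low: assumes "0 < y" "y \<le> r" shows "ennreal (psic y * ((1/y^2 - 1/r^2)/2)) \<le> JJ y"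
proof -
  have "ennreal (psic y * ((1/y^2 - 1/r^2)/2)) = (\<integral>\<^sup>+u. ennreal (psic y / u^3) * indicator {y..r} u \<partial>lborel)"
    using J3[OF assms psic_nn] by simp
  also have "\<dots> \<le> JJ y" unfolding JJ_def
  proof (intro nn_integral_mono)
    fix u
    show "ennreal (psic y / u^3) * indicator {y..r} u \<le> ennreal (psic u / u^3) * indicator {y..r} u"
    proof (cases "u \<in> {y..r}")
      case True
      then have "psic y \<le> psic u" using psic_mono by (auto simp: mono_def)
      then have "psic y / u^3 \<le> psic u / u^3" using True assms by (intro divide_right_mono) auto
      then show ?thesis using True by (simp add: ennreal_leI)
    qed simp
  qed
  finally show ?thesis .
qed

lemma alpha_point:
  assumes x: "0 < x" "x \<le> r"
  shows "-alpha_fun \<phi> r x / x^2 \<le> psic x / x^2 + psic r / r^2 + 2 * enn2real (JJ x)"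
proof -
  define E where "E = enn2real (JJ x)"
  have E0: "0 \<le> E" by (simp add: E_def)
  define A where "A = psic r / r^2 + 2 * E"
  have A0: "0 \<le> A" using E0 psic_nn[of r] by (simp add: A_def)
  have "feas (-A) (\<phi> x)" unfolding feas_def
  proof (intro conjI ballI)
    show "-A \<le> 0" using A0 by simp
    show "\<phi> x \<le> 0" using phi_nonpos x by auto
    fix y assume y: "y \<in> {0..r}"
    show "-A * y^2 + \<phi> x \<le> \<phi> y"
    proof (cases "y \<le> x")
      case True
      then have "\<phi> x \<le> \<phi> y" using phi_noninc x y by auto
      moreover have "0 \<le> A * y^2" using A0 by simp
      ultimately show ?thesis by simp
    next
      case False
      then have yx: "x < y" and y0: "0 < y" and yr: "y \<le> r" using x y by auto
      have "ennreal (psic y * ((1/y^2 - 1/r^2)/2)) \<le> JJ x"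
        using JJ_low[OF y0 yr] JJ_anti[of x y] yx by simp
      then have "enn2real (ennreal (psic y * ((1/y^2 - 1/r^2)/2))) \<le> E"
        unfolding E_def using JJ_fin[OF x(1)] by (intro enn2real_mono) auto
      moreover have "0 \<le> psic y * ((1/y^2 - 1/r^2)/2)"
        using psic_nn[of y] y0 yr by (intro mult_nonneg_nonneg) (auto simp: power_mono frac_le)
      ultimately have e: "psic y * ((1/y^2 - 1/r^2)/2) \<le> E" by simp
      have "psic y * (1 - y^2/r^2) = psic y * ((1/y^2 - 1/r^2)/2) * (2*y^2)"
        using y0 r_pos by (simp add: field_simps)
      also have "\<dots> \<le> E * (2*y^2)" using e by (intro mult_right_mono) auto
      finally have 1: "psic y * (1 - y^2/r^2) \<le> 2 * E * y^2" by simp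
      have "psic y \<le> psic r" using psic_mono yr by (auto simp: mono_def)
      then have "psic y * (y^2/r^2) \<le> psic r * (y^2/r^2)" by (intro mult_right_mono) auto
      then have 2: "psic y * (y^2/r^2) \<le> psic r / r^2 * y^2" by simp
      have "psic y \<le> A * y^2" using 1 2 unfolding A_def by (simp add: algebra_simps)
      moreover have "psic y = -\<phi> y" "psic x = -\<phi> x" using psic_eq y x by auto
      moreover have "0 \<le> psic x" by (rule psic_nn)
      ultimately show ?thesis by simp
    qed
  qed
  then have "-A * x^2 + \<phi> x \<le> alpha_fun \<phi> r x" by (rule alpha_upper)
  then have "-alpha_fun \<phi> r x \<le> A * x^2 + psic x" using psic_eq x by auto
  then have "-alpha_fun \<phi> r x / x^2 \<le> (A * x^2 + psic x) / x^2" by (intro divide_right_mono) auto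
  also have "\<dots> = psic x / x^2 + psic r / r^2 + 2 * E" using x by (simp add: A_def field_simps)
  finally show ?thesis by (simp add: E_def)
qed

lemma JJ_meas[measurable]: "JJ \<in> borel_measurable lborel"
  using meas_J[OF psic_meas, of r] by (simp add: JJ_def[abs_def])

lemma alpha_integral:
  "(\<integral>\<^sup>+ x\<in>{0<..}. ennreal (- alpha_fun \<phi> r x / x\<^sup>2) \<partial>lborel)
    \<le> ennreal (- 2 * \<phi> r / r) + 3 * (\<integral>\<^sup>+ x\<in>{0<..r}. ennreal (- \<phi> x / x\<^sup>2) \<partial>lborel)"
proof -
  define I where "I = (\<integral>\<^sup>+ x\<in>{0<..r}. ennreal (- \<phi> x / x\<^sup>2) \<partial>lborel)"
  have I_eq: "I = (\<integral>\<^sup>+x. ennreal (psic x / x^2) * indicator {0<..r} x \<partial>lborel)"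
    unfolding I_def by (intro nn_integral_cong) (auto simp: psic_eq split: split_indicator)
  define h1 where "h1 = (\<lambda>x. ennreal (psic x / x^2) * indicator {0<..r} x)"
  define h2 where "h2 = (\<lambda>x::real. ennreal (psic r / r^2) * indicator {0<..r} x)"
  define h3 where "h3 = (\<lambda>x. 2 * (JJ x * indicator {0<..r} x))"
  define h4 where "h4 = (\<lambda>x. ennreal (psic r / x^2) * indicator {r..} x)"
  have m1[measurable]: "h1 \<in> borel_measurable lborel" unfolding h1_def by measurable
  have m2[measurable]: "h2 \<in> borel_measurable lborel" unfolding h2_def by measurable
  have m3[measurable]: "h3 \<in> borel_measurable lborel" unfolding h3_def by measurable
  have m4[measurable]: "h4 \<in> borel_measurable lborel" unfolding h4_def by measurable
  have pt: "ennreal (- alpha_fun \<phi> r x / x\<^sup>2) * indicator {0<..} x \<le> h1 x + h2 x + h3 x + h4 x" for x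
  proof (cases "x \<le> 0")
    case True then show ?thesis by simp
  next
    case False
    show ?thesis
    proof (cases "x \<le> r")
      case True
      have x: "0 < x" "x \<le> r" using False True by auto
      have fin: "JJ x \<noteq> top" using JJ_fin[OF x(1)] by simp
      have "ennreal (- alpha_fun \<phi> r x / x\<^sup>2) \<le> ennreal (psic x / x^2 + psic r / r^2 + 2 * enn2real (JJ x))"
        using alpha_point[OF x] by (intro ennreal_leI) simp
      also have "\<dots> = ennreal (psic x / x^2) + ennreal (psic r / r^2) + 2 * JJ x"
      proof -
        have a: "0 \<le> psic x / x^2" "0 \<le> psic r / r^2" "0 \<le> 2 * enn2real (JJ x)"
          using psic_nn[of x] psic_nn[of r] by auto
        have "ennreal (psic x / x^2 + psic r / r^2 + 2 * enn2real (JJ x))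
            = ennreal (psic x / x^2 + psic r / r^2) + ennreal (2 * enn2real (JJ x))"
          by (rule ennreal_plus) (use a in auto)
        also have "ennreal (psic x / x^2 + psic r / r^2) = ennreal (psic x / x^2) + ennreal (psic r / r^2)"
          by (rule ennreal_plus) (use a in auto)
        also have "ennreal (2 * enn2real (JJ x)) = ennreal 2 * ennreal (enn2real (JJ x))"
          by (rule ennreal_mult) auto
        also have "ennreal (enn2real (JJ x)) = JJ x" using fin by (simp add: ennreal_enn2real_if)
        finally show ?thesis by simp
      qed
      also have "\<dots> = h1 x + h2 x + h3 x" using x by (simp add: h1_def h2_def h3_def)
      also have "\<dots> \<le> h1 x + h2 x + h3 x + h4 x" by simp
      finally show ?thesis using x by simp
    next
      case False
      then have x: "x > r" "x > 0" using r_pos by auto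
      have "- alpha_fun \<phi> r x \<le> psic r" using alpha_ge[of x] psic_eq[of r] r_pos by simp
      then have "- alpha_fun \<phi> r x / x\<^sup>2 \<le> psic r / x^2" by (intro divide_right_mono) auto
      then have "ennreal (- alpha_fun \<phi> r x / x\<^sup>2) \<le> h4 x" using x by (simp add: h4_def ennreal_leI)
      also have "\<dots> \<le> h1 x + h2 x + h3 x + h4 x" by simp
      finally show ?thesis using x by simp
    qed
  qed
  have "(\<integral>\<^sup>+ x\<in>{0<..}. ennreal (- alpha_fun \<phi> r x / x\<^sup>2) \<partial>lborel)
      \<le> (\<integral>\<^sup>+x. h1 x + h2 x + h3 x + h4 x \<partial>lborel)"
    by (intro nn_integral_mono pt)
  also have "\<dots> = integral\<^sup>N lborel h1 + integral\<^sup>N lborel h2 + integral\<^sup>N lborel h3 + integral\<^sup>N lborel h4"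
    by (simp add: nn_integral_add)
  also have "integral\<^sup>N lborel h1 = I" unfolding I_eq h1_def ..
  also have "integral\<^sup>N lborel h2 = ennreal (psic r / r)"
  proof -
    have "integral\<^sup>N lborel h2 = ennreal (psic r / r^2) * emeasure lborel {0<..r}"
      unfolding h2_def by (rule nn_integral_cmult_indicator) simp
    also have "\<dots> = ennreal (psic r / r^2 * r)"
    proof -
      have "ennreal (psic r / r^2 * r) = ennreal (psic r / r^2) * ennreal r"
        by (rule ennreal_mult) (use r_pos psic_nn[of r] in auto)
      then show ?thesis using r_pos by simp
    qed
    also have "psic r / r^2 * r = psic r / r" using r_pos by (simp add: power2_eq_square)
    finally show ?thesis .
  qed
  also have "integral\<^sup>N lborel h3 = 2 * I"
  proof -
    have "integral\<^sup>N lborel h3 = 2 * (\<integral>\<^sup>+x. JJ x * indicator {0<..r} x \<partial>lborel)"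
      unfolding h3_def by (rule nn_integral_cmult) measurable
    also have "(\<integral>\<^sup>+x. JJ x * indicator {0<..r} x \<partial>lborel) = I"
      unfolding I_eq JJ_def by (rule tonelli[OF psic_meas psic_nn])
    finally show ?thesis .
  qed
  also have "integral\<^sup>N lborel h4 = ennreal (psic r / r)"
    unfolding h4_def by (rule h4[OF r_pos psic_nn])
  also have "I + ennreal (psic r / r) + 2 * I + ennreal (psic r / r) = ennreal (- 2 * \<phi> r / r) + 3 * I"
  proof -
    have "ennreal (- 2 * \<phi> r / r) = ennreal (psic r / r) + ennreal (psic r / r)"
    proof -
      have "ennreal (psic r / r + psic r / r) = ennreal (psic r / r) + ennreal (psic r / r)"
        by (rule ennreal_plus) (use r_pos psic_nn[of r] in auto)
      moreover have "- 2 * \<phi> r / r = psic r / r + psic r / r" using psic_eq[of r] r_pos by simp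
      ultimately show ?thesis by simp
    qed
    moreover have "(3::ennreal) * I = I + 2 * I"
    proof -
      have "(3::ennreal) = 1 + 2" by simp
      then show ?thesis by (simp only: distrib_right mult_1)
    qed
    ultimately show ?thesis by (simp only: add.assoc add.commute add.left_commute)
  qed
  finally show ?thesis unfolding I_def .
qed

end

theorem lemma6p1:
  fixes \<phi> :: "real \<Rightarrow> real" and r :: real
  assumes r_pos: "r > 0"
    and phi_nonpos: "\<forall>x\<in>{0..r}. \<phi> x \<le> 0"
    and phi_noninc: "\<forall>x\<in>{0..r}. \<forall>y\<in>{0..r}. x \<le> y \<longrightarrow> \<phi> y \<le> \<phi> x"
    and phi_lim: "((\<lambda>x. \<phi> x / x) \<longlongrightarrow> 0) (at_right 0)"
  defines "\<alpha> \<equiv> alpha_fun \<phi> r"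
  shows "(\<exists>L. L-lipschitz_on UNIV \<alpha>)
      \<and> ((\<lambda>x. \<alpha> x / x) \<longlongrightarrow> 0) (at 0)
      \<and> (\<forall>x y. 0 < x \<and> x \<le> y \<and> \<alpha> differentiable (at x) \<and> \<alpha> differentiable (at y)
              \<longrightarrow> deriv \<alpha> x / x \<le> deriv \<alpha> y / y)
      \<and> (\<integral>\<^sup>+ x\<in>{0<..}. ennreal (- \<alpha> x / x\<^sup>2) \<partial>lborel)
          \<le> ennreal (- 2 * \<phi> r / r) + 3 * (\<integral>\<^sup>+ x\<in>{0<..r}. ennreal (- \<phi> x / x\<^sup>2) \<partial>lborel)"
  unfolding \<alpha>_def
  using alpha_lip[OF r_pos phi_nonpos phi_noninc phi_lim]
    alpha_lim[OF r_pos phi_nonpos phi_noninc phi_lim]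
    alpha_deriv_mono[OF r_pos phi_nonpos phi_noninc phi_lim]
    alpha_integral[OF r_pos phi_nonpos phi_noninc phi_lim]
  by blast

end
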